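(* There exist a polynomial $p$ and a constant $c>0$ such that for every integer $k\geq 1$ there exist an approval election $E=(N,C,(A_v)_{v\in N},k)$ with $|N|\le p(k)$ voters, a linear order $<$ on $C$, and a committee $W_0\subseteq C$ with $|W_0|=k$, such that running the local search algorithm $0^+$-ls-PAV with lexicographic better response (with respect to $<$) starting from $W_0$ performs at least $c\,k^{\log k}$ swaps (i.e., $\Omega(k^{\log k})$ swaps) before terminating.
   Context: An approval election is a tuple $E=(N,C,(A_v)_{v\in N},k)$ where $N=[n]$ is a set of voters, $C$ is a finite set of candidates, $A_v\subseteq C$ is the approval ballot of voter $v$, and $k$ is the target committee size. The PAV score of a committee $W\subseteq C$ is $\textsc{pavsc}(W)=\sum_{v\in N}\sum_{j=1}^{|A_v\cap W|}\frac{1}{j}$, and for $a\in W$, $b\notin W$, $\Delta(W,a,b)=\textsc{pavsc}((W\setminus\{a\})\cup\{b\})-\textsc{pavsc}(W)$. The algorithm $\varepsilon$-ls-PAV starts from a size-$k$ committee $W$ and, while there exist $a\in W$, $b\notin W$ with $\Delta(W,a,b)\ge\varepsilon$, replaces $W$ by $(W\cup\{b\})\setminus\{a\}$; it returns $W$ when no such pair exists. $0^+$-ls-PAV denotes $\varepsilon$-ls-PAV with $\varepsilon=1/\mathrm{lcm}(1,2,\dots,k)$, which is equivalent to performing a swap exactly when $\Delta(W,a,b)>0$. Lexicographic better response with respect to a linear order $<$ on $C$ selects the swap as follows: iterate over the candidates $b\in C\setminus W$ in increasing order of $<$, and for each such $b$ iterate over the candidates $a\in W$ in increasing order of $<$;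 perform the first swap $(a,b)$ encountered with $\Delta(W,a,b)>0$. Here $\log$ denotes the base-2 logarithm. *)

theory Defs
  imports Complex_Main "HOL-Computational_Algebra.Polynomial"
begin

definition approval_election :: "nat \<Rightarrow> nat set \<Rightarrow> (nat \<Rightarrow> nat set) \<Rightarrow> nat \<Rightarrow> bool" where
  "approval_election n C A k \<longleftrightarrow> finite C \<and> (\<forall>v\<in>{1..n}. A v \<subseteq> C)"

definition pavsc :: "nat \<Rightarrow> (nat \<Rightarrow> nat set) \<Rightarrow> nat set \<Rightarrow> real" where
  "pavsc n A W = (\<Sum>v\<in>{1..n}. \<Sum>j=1..card (A v \<inter> W). 1 / real j)"

definition pav_delta :: "nat \<Rightarrow> (nat \<Rightarrow> nat set) \<Rightarrow> nat set \<Rightarrow> nat \<Rightarrow> nat \<Rightarrow> real" where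
  "pav_delta n A W a b = pavsc n A (insert b (W - {a})) - pavsc n A W"

definition least_wrt :: "(nat \<times> nat) set \<Rightarrow> nat set \<Rightarrow> nat" where
  "least_wrt lt S = (THE x. x \<in> S \<and> (\<forall>y\<in>S. y \<noteq> x \<longrightarrow> (x, y) \<in> lt))"

text \<open>One step of 0^+-ls-PAV with lexicographic better response w.r.t. lt:
  None if no improving swap exists (termination), otherwise the new committee.
  b ranges over C - W in increasing order; for the first b admitting an improving
  a, a is the least improving member of W.\<close>
definition lex_step :: "(nat \<times> nat) set \<Rightarrow> nat set \<Rightarrow> nat \<Rightarrow> (nat \<Rightarrow> nat set) \<Rightarrow> nat set \<Rightarrow> nat set option" where
  "lex_step lt C n A W =
    (let Bs = {b \<in> C - W. \<exists>a\<in>W. pav_delta n A W a b > 0} in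
     if Bs = {} then None
     else (let b = least_wrt lt Bs;
               a = least_wrt lt {a \<in> W. pav_delta n A W a b > 0}
           in Some (insert b (W - {a}))))"

definition performs_at_least :: "(nat \<times> nat) set \<Rightarrow> nat set \<Rightarrow> nat \<Rightarrow> (nat \<Rightarrow> nat set) \<Rightarrow> nat set \<Rightarrow> nat \<Rightarrow> bool" where
  "performs_at_least lt C n A W0 m \<longleftrightarrow>
     (\<exists>Ws :: nat \<Rightarrow> nat set. Ws 0 = W0 \<and> (\<forall>i<m. lex_step lt C n A (Ws i) = Some (Ws (Suc i))))"

end

theory Submission
  imports Defs "HOL-Library.FuncSet"
begin


fun lcmto :: "nat \<Rightarrow> nat" where
  "lcmto 0 = 1"
| "lcmto (Suc k) = lcm (lcmto k) (Suc k)"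

lemma lcmto_pos: "lcmto k > 0"
  by (induction k) (auto simp: lcm_pos_nat)

lemma dvd_lcmto: "1 \<le> j \<Longrightarrow> j \<le> k \<Longrightarrow> j dvd lcmto k"
proof (induction k)
  case 0 then show ?case by simp
next
  case (Suc k)
  then show ?case
    by (cases "j = Suc k") (auto intro: dvd_trans[OF _ dvd_lcm1])
qed

lemma pascal_sum:
  fixes h :: "nat \<Rightarrow> real"
  shows "(\<Sum>i\<le>Suc r. (-1)^i * real (Suc r choose i) * h i)
       = (\<Sum>i\<le>r. (-1)^i * real (r choose i) * h i) - (\<Sum>i\<le>r. (-1)^i * real (r choose i) * h (Suc i))"
proof -
  have "(\<Sum>i\<le>Suc r. (-1)^i * real (Suc r choose i) * h i)
     = h 0 + (\<Sum>i\<le>r. (-1)^(Suc i) * real (Suc r choose Suc i) * h (Suc i))"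
    by (subst sum.atMost_Suc_shift) simp
  also have "\<dots> = h 0 + (\<Sum>i\<le>r. (-1)^(Suc i) * real (r choose Suc i) * h (Suc i))
                  - (\<Sum>i\<le>r. (-1)^i * real (r choose i) * h (Suc i))"
  proof -
    have "\<And>i. (-1)^(Suc i) * real (Suc r choose Suc i) * h (Suc i)
        = (-1)^(Suc i) * real (r choose Suc i) * h (Suc i) - (-1)^i * real (r choose i) * h (Suc i)"
      by (simp add: algebra_simps)
    then have "(\<Sum>i\<le>r. (-1)^(Suc i) * real (Suc r choose Suc i) * h (Suc i))
       = (\<Sum>i\<le>r. (-1)^(Suc i) * real (r choose Suc i) * h (Suc i))
                  - (\<Sum>i\<le>r. (-1)^i * real (r choose i) * h (Suc i))"
      by (simp add: sum_subtractf)
    then show ?thesis by simp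
  qed
  also have "h 0 + (\<Sum>i\<le>r. (-1)^(Suc i) * real (r choose Suc i) * h (Suc i))
     = (\<Sum>i\<le>Suc r. (-1)^i * real (r choose i) * h i)"
    by (subst sum.atMost_Suc_shift) simp
  also have "\<dots> = (\<Sum>i\<le>r. (-1)^i * real (r choose i) * h i)"
    by simp
  finally show ?thesis .
qed

lemma aux_frac:
  fixes A B F N M R :: real
  assumes "M' = M + 1" "R' = R + 1" "F > 0" "N > 0" "N = M + R + 2"
  shows "A * B / F - A * (M' * B) / (N * F) = (R' * A) * B / (N * F)"
proof -
  have 1: "A * B / F = (A * B * N) / (N * F)" using assms by simp
  have 2: "A * (M' * B) / (N * F) = (A * B * M') / (N * F)" by (simp add: ac_simps)
  have 3: "A * B * N - A * B * M' = R' * A * B" using assms by (simp add: algebra_simps)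
  show ?thesis unfolding 1 2 diff_divide_distrib[symmetric] 3 ..
qed

lemma beta_ident:
  "(\<Sum>i\<le>r. (-1)^i * real (r choose i) * (1 / real (m + 1 + i)))
     = fact r * fact m / fact (m + r + 1)"
proof (induction r arbitrary: m)
  case 0
  have "fact m / fact (m + 0 + 1) = fact m / (real (m+1) * (fact m :: real))" by simp
  also have "\<dots> = 1 / real (m + 1)" by simp
  finally show ?case by simp
next
  case (Suc r)
  have "(\<Sum>i\<le>Suc r. (-1)^i * real (Suc r choose i) * (1 / real (m + 1 + i)))
       = (\<Sum>i\<le>r. (-1)^i * real (r choose i) * (1 / real (m + 1 + i)))
        - (\<Sum>i\<le>r. (-1)^i * real (r choose i) * (1 / real (Suc m + 1 + i)))"
    using pascal_sum[of r "\<lambda>i. 1 / real (m + 1 + i)"] by simp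
  also have "\<dots> = fact r * fact m / fact (m + r + 1) - fact r * fact (Suc m) / fact (Suc m + r + 1)"
    using Suc.IH[of m] Suc.IH[of "Suc m"] by simp
  also have "\<dots> = fact (Suc r) * fact m / fact (m + Suc r + 1)"
  proof -
    define F :: real where "F = fact (m + r + 1)"
    have Fp: "F > 0" unfolding F_def by simp
    have e: "fact (Suc m + r + 1) = real (m + r + 2) * F"
      unfolding F_def by (simp add: algebra_simps)
    have e2: "fact (m + Suc r + 1) = real (m + r + 2) * F"
      unfolding F_def by (simp add: algebra_simps)
    have e3: "(fact (Suc m) :: real) = real (m + 1) * fact m" by simp
    have e4: "(fact (Suc r) :: real) = real (r + 1) * fact r" by simp
    show ?thesis unfolding e e2 e3 e4 F_def[symmetric]
      by (rule aux_frac[of _ "real m" _ "real r" _ "real (m + r + 2)"]) (auto simp: Fp)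
  qed
  finally show ?case .
qed

lemma int_pos_ge1: "(x::real) \<in> \<int> \<Longrightarrow> x > 0 \<Longrightarrow> x \<ge> 1"
  by (auto elim!: Ints_cases)

lemma lcmto_ge_binom:
  assumes "r < k"
  shows "real (k choose r) \<le> real (lcmto k)"
proof -
  define m where "m = k - r - 1"
  have km: "k = m + 1 + r" using assms unfolding m_def by simp
  define L where "L = real (lcmto k)"
  have "L * (\<Sum>i\<le>r. (-1)^i * real (r choose i) * (1 / real (m + 1 + i)))
      = (\<Sum>i\<le>r. (-1)^i * real (r choose i) * real (lcmto k div (m + 1 + i)))"
    unfolding sum_distrib_left
  proof (rule sum.cong[OF refl])
    fix i assume "i \<in> {..r}"
    then have "(m + 1 + i) dvd lcmto k" using km by (intro dvd_lcmto) auto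
    then have "real (lcmto k div (m + 1 + i)) = L / real (m + 1 + i)"
      unfolding L_def by (simp add: real_of_nat_div)
    then show "L * ((-1)^i * real (r choose i) * (1 / real (m + 1 + i)))
        = (-1)^i * real (r choose i) * real (lcmto k div (m + 1 + i))" by simp
  qed
  also have "\<dots> \<in> \<int>"
    by (intro Ints_sum Ints_mult) (auto simp: Ints_power)
  finally have I: "L * (fact r * fact m / fact (m + r + 1)) \<in> \<int>"
    unfolding beta_ident .
  have Lp: "L > 0" unfolding L_def using lcmto_pos by simp
  have "L * (fact r * fact m / fact (m + r + 1)) > 0" using Lp by simp
  with I have "L * (fact r * fact m / fact (m + r + 1)) \<ge> 1" by (rule int_pos_ge1)
  then have "1 \<le> L * (fact r * fact m) / fact (m + r + 1)" by simp
  then have ge: "fact (m + r + 1) \<le> L * (fact r * fact m)"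
    by (subst (asm) pos_le_divide_eq) auto
  have "real (k choose r) = fact k / (fact r * fact (k - r))"
    using assms by (simp add: binomial_fact)
  also have "fact (k - r) = real (m + 1) * (fact m :: real)"
    using km by simp
  also have "fact k / (fact r * (real (m + 1) * fact m)) = (fact k / (fact r * fact m)) / real (m + 1)"
    by simp
  also have "\<dots> \<le> (fact k / (fact r * fact m)) / 1"
    by (intro divide_left_mono) auto
  also have "\<dots> = fact k / (fact r * fact m)" by simp
  also have "\<dots> \<le> L"
    using ge km by (simp add: field_simps ac_simps)
  finally show ?thesis unfolding L_def .
qed

lemma two_pow_le_lcmto:
  assumes "k \<ge> 1"
  shows "2 ^ k \<le> real (k + 1) * real (lcmto k)"
proof -
  have "(2::real) ^ k = real (\<Sum>i\<le>k. k choose i)" by (simp add: choose_row_sum)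
  also have "\<dots> \<le> real (\<Sum>i\<le>k. k choose (k div 2))"
    by (intro of_nat_mono sum_mono binomial_maximum)
  also have "\<dots> = real (k + 1) * real (k choose (k div 2))" by (simp add: algebra_simps)
  also have "\<dots> \<le> real (k + 1) * real (lcmto k)"
    using assms by (intro mult_left_mono lcmto_ge_binom) auto
  finally show ?thesis .
qed

definition valw :: "nat \<Rightarrow> (nat \<Rightarrow> nat) \<Rightarrow> real" where
  "valw k a = (\<Sum>j\<in>{1..k}. real (a j) / real j)"

lemma residue_lemma:
  "\<exists>a \<in> PiE {1..k} (\<lambda>j. {..<j}). valw k a - real_of_int r / real (lcmto k) \<in> \<int>"
proof (induction k arbitrary: r)
  case 0
  show ?case by (rule bexI[of _ "\<lambda>_. undefined"]) (auto simp: valw_def Ints_minus)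
next
  case (Suc k)
  define L where "L = lcmto k"
  define L' where "L' = lcmto (Suc k)"
  have L'def: "L' = lcm L (Suc k)" unfolding L_def L'_def by simp
  obtain u v :: int where uv: "u * int L + v * int (Suc k) = int (gcd L (Suc k))"
    using bezout_int[of "int L" "int (Suc k)"] by (metis gcd_int_int_eq)
  have Lp: "L > 0" unfolding L_def by (rule lcmto_pos)
  have gl: "real (gcd L (Suc k)) * real L' = real L * real (Suc k)"
    unfolding L'def by (metis of_nat_mult prod_gcd_lcm_nat)
  have gp: "gcd L (Suc k) > 0" using Lp by simp
  have L'p: "L' > 0" unfolding L'_def by (rule lcmto_pos)
  have key: "real_of_int r / real L' = real_of_int (r * v) / real L + real_of_int (r * u) / real (Suc k)"
  proof -
    have "real_of_int r / real L' = real_of_int r * real (gcd L (Suc k)) / (real (gcd L (Suc k)) * real L')"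
      using gp by simp
    also have "\<dots> = real_of_int r * real (gcd L (Suc k)) / (real L * real (Suc k))"
      unfolding gl ..
    also have "real (gcd L (Suc k)) = real_of_int u * real L + real_of_int v * real (Suc k)"
      using arg_cong[OF uv, of real_of_int] by simp
    finally show ?thesis using Lp by (simp add: field_simps)
  qed
  obtain a where a: "a \<in> PiE {1..k} (\<lambda>j. {..<j})"
    and ai: "valw k a - real_of_int (r * v) / real L \<in> \<int>"
    using Suc.IH[of "r * v"] unfolding L_def by blast
  define c where "c = nat ((r * u) mod int (Suc k))"
  have cl: "c < Suc k" unfolding c_def by (simp add: nat_less_iff)
  have cr: "real c = real_of_int ((r * u) mod int (Suc k))" unfolding c_def by simp
  define a' where "a' = a(Suc k := c)"
  have a'P: "a' \<in> PiE {1..Suc k} (\<lambda>j. {..<j})"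
    using a cl unfolding a'_def by (auto simp: PiE_def extensional_def Pi_def)
  have va: "valw (Suc k) a' = valw k a + real c / real (Suc k)"
  proof -
    have "{1..Suc k} = insert (Suc k) {1..k}" by auto
    then have "valw (Suc k) a' = real (a' (Suc k)) / real (Suc k) + (\<Sum>j\<in>{1..k}. real (a' j) / real j)"
      unfolding valw_def by simp
    also have "(\<Sum>j\<in>{1..k}. real (a' j) / real j) = valw k a"
      unfolding valw_def a'_def by (intro sum.cong) auto
    finally show ?thesis unfolding a'_def by (simp add: fun_upd_def)
  qed
  have cint: "real c / real (Suc k) - real_of_int (r * u) / real (Suc k) \<in> \<int>"
  proof -
    have "real_of_int (r * u) = real_of_int ((r * u) div int (Suc k)) * real (Suc k) + real c"
      unfolding cr by (metis div_mult_mod_eq of_int_add of_int_mult of_int_of_nat_eq)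
    moreover have "\<And>q K c' :: real. K > 0 \<Longrightarrow> c' / K - (q * K + c') / K = - q"
      by (simp add: field_simps)
    ultimately have "real c / real (Suc k) - real_of_int (r * u) / real (Suc k) = - real_of_int ((r * u) div int (Suc k))"
      by (metis of_nat_0_less_iff zero_less_Suc)
    then show ?thesis by simp
  qed
  have "valw (Suc k) a' - real_of_int r / real L' =
      (valw k a - real_of_int (r * v) / real L) + (real c / real (Suc k) - real_of_int (r * u) / real (Suc k))"
    unfolding va key by simp
  also have "\<dots> \<in> \<int>" using ai cint by (rule Ints_add)
  finally show ?case using a'P unfolding L'_def by blast
qed



definition Dset :: "nat \<Rightarrow> (nat \<Rightarrow> nat) set" where
  "Dset k = PiE {1..k} (\<lambda>_. {..k})"

definition Vset :: "nat \<Rightarrow> real set" where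
  "Vset k = valw k ` Dset k"

lemma finite_Vset: "finite (Vset k)"
  unfolding Vset_def Dset_def by (intro finite_imageI finite_PiE) auto

lemma Ints_small_zero: "(x::real) \<in> \<int> \<Longrightarrow> \<bar>x\<bar> < 1 \<Longrightarrow> x = 0"
  by (auto elim!: Ints_cases)

lemma card_Vset_ge_lcm: "lcmto k \<le> card (Vset k)"
proof -
  define L where "L = lcmto k"
  have Lp: "L > 0" unfolding L_def by (rule lcmto_pos)
  have "\<forall>r. \<exists>a. a \<in> PiE {1..k} (\<lambda>j. {..<j}) \<and> valw k a - real_of_int r / real L \<in> \<int>"
    using residue_lemma unfolding L_def by blast
  then have "\<exists>af. \<forall>r. af r \<in> PiE {1..k} (\<lambda>j. {..<j}) \<and> valw k (af r) - real_of_int r / real L \<in> \<int>"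
    by (rule choice)
  then obtain af where af0: "\<forall>r. af r \<in> PiE {1..k} (\<lambda>j. {..<j}) \<and> valw k (af r) - real_of_int r / real L \<in> \<int>"
    by blast
  then have af: "\<And>r. af r \<in> PiE {1..k} (\<lambda>j. {..<j})"
    "\<And>r. valw k (af r) - real_of_int r / real L \<in> \<int>" by auto
  define f where "f r = valw k (af (int r))" for r
  have sub: "PiE {1..k} (\<lambda>j. {..<j}) \<subseteq> Dset k"
    unfolding Dset_def by (intro PiE_mono) auto
  have img: "f ` {..<L} \<subseteq> Vset k"
    unfolding f_def Vset_def using af(1) sub by blast
  have inj: "inj_on f {..<L}"
  proof (rule inj_onI)
    fix r r' assume r: "r \<in> {..<L}" and r': "r' \<in> {..<L}" and eq: "f r = f r'"
    have "(valw k (af (int r')) - real_of_int (int r') / real L) - (valw k (af (int r)) - real_of_int (int r) / real L) \<in> \<int>"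
      by (rule Ints_diff[OF af(2) af(2)])
    also have "(valw k (af (int r')) - real_of_int (int r') / real L) - (valw k (af (int r)) - real_of_int (int r) / real L)
        = (real r - real r') / real L"
      using eq unfolding f_def by (simp add: diff_divide_distrib)
    finally have I: "(real r - real r') / real L \<in> \<int>" .
    have "\<bar>real r - real r'\<bar> < real L" using r r' by auto
    moreover have "\<bar>(real r - real r') / real L\<bar> = \<bar>real r - real r'\<bar> / real L"
      by (simp only: abs_divide abs_of_nat)
    ultimately have "\<bar>(real r - real r') / real L\<bar> < 1" using Lp by (simp only: pos_divide_less_eq of_nat_0_less_iff mult_1)
    with I have "(real r - real r') / real L = 0" by (rule Ints_small_zero)
    then show "r = r'" using Lp by simp
  qed
  have "card {..<L} \<le> card (Vset k)"
    by (rule card_inj_on_le[OF inj img finite_Vset])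
  then show ?thesis unfolding L_def by simp
qed

lemma card_Vset_ge2: "k \<ge> 1 \<Longrightarrow> 2 \<le> card (Vset k)"
proof -
  assume k: "k \<ge> 1"
  define a0 where "a0 = restrict (\<lambda>_. 0::nat) {1..k}"
  define a1 where "a1 = restrict (\<lambda>j. if j = 1 then 1 else 0::nat) {1..k}"
  have "a0 \<in> Dset k" "a1 \<in> Dset k" unfolding a0_def a1_def Dset_def using k by auto
  moreover have "valw k a0 = 0" unfolding valw_def a0_def by simp
  moreover have "valw k a1 = 1"
  proof -
    have "valw k a1 = (\<Sum>j\<in>{1..k}. if j = 1 then 1 else 0)"
      unfolding valw_def a1_def by (intro sum.cong) auto
    also have "\<dots> = 1" using k by simp
    finally show ?thesis .
  qed
  ultimately have "0 \<in> Vset k" "1 \<in> Vset k" unfolding Vset_def by (metis image_eqI)+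
  then have "{0, 1} \<subseteq> Vset k" by simp
  then have "card {0::real, 1} \<le> card (Vset k)" by (intro card_mono finite_Vset)
  then show ?thesis by simp
qed



definition Hs :: "nat \<Rightarrow> real" where "Hs c = (\<Sum>j=1..c. 1 / real j)"

lemma pavsc_Hs: "pavsc n A W = (\<Sum>v\<in>{1..n}. Hs (card (A v \<inter> W)))"
  by (simp add: pavsc_def Hs_def)

lemma Hs_Suc: "Hs (Suc c) = Hs c + 1 / real (Suc c)"
  by (simp add: Hs_def)

lemma Hs_0 [simp]: "Hs 0 = 0" by (simp add: Hs_def)
lemma Hs_1 [simp]: "Hs 1 = 1" by (simp add: Hs_def)
lemma Hs_Suc0 [simp]: "Hs (Suc 0) = 1" by (simp add: Hs_def)

lemma Hs_mono: "a \<le> b \<Longrightarrow> Hs a \<le> Hs b"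
  unfolding Hs_def by (intro sum_mono2) auto

lemma Hs_step_le1: "c' \<le> Suc c \<Longrightarrow> Hs c' - Hs c \<le> 1"
proof (cases "c' \<le> c")
  case True
  assume "c' \<le> Suc c"
  then show ?thesis using Hs_mono[OF True] by simp
next
  case False
  assume "c' \<le> Suc c"
  then have "c' = Suc c" using False by simp
  then show ?thesis by (simp add: Hs_Suc)
qed

definition nvot :: "nat \<Rightarrow> nat" where "nvot k = k * k + (k - 1) * (k * k + 1)"

definition bal :: "nat \<Rightarrow> nat \<Rightarrow> (nat \<Rightarrow> nat \<Rightarrow> nat) \<Rightarrow> nat \<Rightarrow> nat set" where
  "bal k M g v = (if v - 1 < k * k
      then {..<(v - 1) div k} \<union> {s + k | s. s < M \<and> (v - 1) mod k < g s ((v - 1) div k + 1)}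
      else {(v - 1 - k * k) div (k * k + 1)})"

definition Cs :: "nat \<Rightarrow> nat \<Rightarrow> nat set" where "Cs k M = {..<k - 1} \<union> {s + k | s. s < M}"

definition Ws :: "nat \<Rightarrow> nat \<Rightarrow> nat set" where "Ws k t = insert (t + k) {..<k - 1}"

lemma anchor_idx_lt:
  assumes "v \<in> {1..nvot k}" "\<not> v - 1 < k * k"
  shows "(v - 1 - k * k) div (k * k + 1) < k - 1"
proof -
  have "v - 1 - k * k < (k - 1) * (k * k + 1)" using assms unfolding nvot_def by auto
  then show ?thesis by (simp add: div_less_iff_less_mult)
qed

lemma pav_delta_sum: "pav_delta n A W a b =
   (\<Sum>v\<in>{1..n}. Hs (card (A v \<inter> insert b (W - {a}))) - Hs (card (A v \<inter> W)))"
  unfolding pav_delta_def pavsc_Hs by (simp add: sum_subtractf)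

lemma nat_aux1: "(P::nat) \<le> v - 1 - Q \<Longrightarrow> v - 1 - Q < P + K \<Longrightarrow> \<not> v - 1 < Q \<Longrightarrow> v \<ge> 1 \<Longrightarrow> Q + P + 1 \<le> v \<and> v \<le> Q + P + K"
  by arith

lemma frozen_neg:
  assumes k: "k \<ge> 1" and fW: "finite W" and FW: "{..<k - 1} \<subseteq> W" and f: "f < k - 1" and b: "b \<notin> W"
  shows "pav_delta (nvot k) (bal k M g) W f b < 0"
proof -
  define n where "n = nvot k"
  define A where "A = bal k M g"
  define W' where "W' = insert b (W - {f})"
  define K where "K = k * k + 1"
  define I where "I = {k * k + f * K + 1 .. k * k + f * K + K}"
  define e where "e v = (if v \<in> {1..k*k} then 1 else 0) + (if v \<in> I then -1 else (0::real))" for v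
  have fW': "f \<in> W" using FW f by auto
  have bf: "b \<noteq> f" using b fW' by auto
  have Isub: "I \<subseteq> {1..n}"
  proof -
    have "f + 1 \<le> k - 1" using f by simp
    then have "(f + 1) * K \<le> (k - 1) * K" by (intro mult_right_mono) auto
    then show ?thesis unfolding I_def n_def nvot_def K_def by (auto simp: algebra_simps)
  qed
  have K1sub: "{1..k*k} \<subseteq> {1..n}" unfolding n_def nvot_def by auto
  have dle: "Hs (card (A v \<inter> W')) - Hs (card (A v \<inter> W)) \<le> e v" if v: "v \<in> {1..n}" for v
  proof (cases "v - 1 < k * k")
    case True
    then have vK: "v \<in> {1..k*k}" "v \<notin> I" using v unfolding I_def by auto
    have "A v \<inter> W' \<subseteq> insert b (A v \<inter> W)" unfolding W'_def by auto
    then have "card (A v \<inter> W') \<le> card (insert b (A v \<inter> W))"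
      using fW by (intro card_mono) auto
    also have "\<dots> \<le> Suc (card (A v \<inter> W))" using fW by (simp add: card_insert_if)
    finally have "Hs (card (A v \<inter> W')) - Hs (card (A v \<inter> W)) \<le> 1" by (rule Hs_step_le1)
    then show ?thesis using vK unfolding e_def by simp
  next
    case False
    define f' where "f' = (v - 1 - k * k) div K"
    have Av: "A v = {f'}" unfolding A_def bal_def f'_def K_def using False by simp
    have f'lt: "f' < k - 1" unfolding f'_def K_def using anchor_idx_lt[of v k] v False unfolding n_def by simp
    have vK: "v \<notin> {1..k*k}" using False by auto
    show ?thesis
    proof (cases "f' = f")
      case True
      define x where "x = v - 1 - k * k"
      have Kp: "K > 0" unfolding K_def by simp
      have xe: "x = f * K + x mod K" using True unfolding f'_def x_def[symmetric]
        by (metis div_mult_mod_eq)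
      have "x mod K < K" using Kp by simp
      then have "f * K \<le> v - 1 - k * k" "v - 1 - k * k < f * K + K"
        using xe unfolding x_def[symmetric] by linarith+
      then have "v \<in> I" unfolding I_def using False v nat_aux1[of "f * K" v "k * k" K] by (simp only: atLeastAtMost_iff) simp
      moreover have "A v \<inter> W = {f}" using Av True fW' by auto
      moreover have "A v \<inter> W' = {}" using Av True unfolding W'_def using bf by auto
      ultimately show ?thesis using vK unfolding e_def by simp
    next
      case False2: False
      have "f' \<in> W" "f' \<in> W'" using FW f'lt False2 unfolding W'_def by auto
      then have "A v \<inter> W = {f'}" "A v \<inter> W' = {f'}" using Av by auto
      have "v \<notin> I"
      proof
        assume "v \<in> I"
        then have "K * f \<le> v - 1 - k * k" "v - 1 - k * k < K * Suc f"
          unfolding I_def by (auto simp: algebra_simps)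
        then have "f' = f" unfolding f'_def by (rule div_nat_eqI)
        then show False using False2 by simp
      qed
      then show ?thesis using vK \<open>A v \<inter> W = {f'}\<close> \<open>A v \<inter> W' = {f'}\<close> unfolding e_def by simp
    qed
  qed
  have "pav_delta n A W f b = (\<Sum>v\<in>{1..n}. Hs (card (A v \<inter> W')) - Hs (card (A v \<inter> W)))"
    unfolding pav_delta_sum W'_def ..
  also have "\<dots> \<le> (\<Sum>v\<in>{1..n}. e v)" using dle by (intro sum_mono) auto
  also have "(\<Sum>v\<in>{1..n}. e v) = (\<Sum>v\<in>{1..n}. if v \<in> {1..k*k} then 1 else 0) + (\<Sum>v\<in>{1..n}. if v \<in> I then -1 else (0::real))"
    unfolding e_def by (simp add: sum.distrib)
  also have "(\<Sum>v\<in>{1..n}. if v \<in> {1..k*k} then 1 else (0::real)) = (\<Sum>v\<in>{1..n} \<inter> {1..k*k}. 1)"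
    by (subst sum.inter_restrict) auto
  also have "{1..n} \<inter> {1..k*k} = {1..k*k}" using K1sub by auto
  also have "(\<Sum>v\<in>{1..n}. if v \<in> I then -1 else (0::real)) = (\<Sum>v\<in>{1..n} \<inter> I. -1)"
    by (subst sum.inter_restrict) auto
  also have "{1..n} \<inter> I = I" using Isub by auto
  also have "(\<Sum>v\<in>{1..k*k}. (1::real)) + (\<Sum>v\<in>I. -1) = -1"
    unfolding I_def K_def by simp
  finally show ?thesis unfolding n_def A_def by simp
qed

lemma Ws_finite: "finite (Ws k t)" unfolding Ws_def by simp

lemma card_Av_Ws:
  assumes k: "k \<ge> 1" and v: "v \<in> {1..k*k}" and s: "s < M"
  shows "card (bal k M g v \<inter> Ws k s) = (v - 1) div k + (if (v - 1) mod k < g s ((v - 1) div k + 1) then 1 else 0)"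
proof -
  define q where "q = (v - 1) div k"
  have vlt: "v - 1 < k * k" using v by auto
  have qk: "q < k" unfolding q_def using vlt k by (simp add: div_less_iff_less_mult)
  define X where "X = (if (v - 1) mod k < g s (q + 1) then {s + k} else {})"
  have sk: "\<not> s + k < q" using qk by simp
  have eq: "bal k M g v \<inter> Ws k s = {..<q} \<union> X"
    using vlt qk s sk unfolding bal_def Ws_def X_def q_def[symmetric]
    by auto
  have "card ({..<q} \<union> X) = q + card X"
    using sk by (subst card_Un_disjoint) (auto simp: X_def)
  then show ?thesis unfolding eq X_def q_def by simp
qed

definition Base :: "nat \<Rightarrow> real" where
  "Base k = (\<Sum>v\<in>{1..nvot k}. if v - 1 < k * k then Hs ((v - 1) div k) else 1)"

definition Ex :: "nat \<Rightarrow> (nat \<Rightarrow> nat \<Rightarrow> nat) \<Rightarrow> nat \<Rightarrow> real" where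
  "Ex k g s = (\<Sum>v\<in>{1..nvot k}. if v - 1 < k * k \<and> (v - 1) mod k < g s ((v - 1) div k + 1)
      then 1 / real ((v - 1) div k + 1) else 0)"

lemma pav_Ws:
  assumes k: "k \<ge> 1" and s: "s < M"
  shows "pavsc (nvot k) (bal k M g) (Ws k s) = Base k + Ex k g s"
proof -
  have "Hs (card (bal k M g v \<inter> Ws k s)) =
     (if v - 1 < k * k then Hs ((v - 1) div k) else 1) +
     (if v - 1 < k * k \<and> (v - 1) mod k < g s ((v - 1) div k + 1) then 1 / real ((v - 1) div k + 1) else 0)"
    if v: "v \<in> {1..nvot k}" for v
  proof (cases "v - 1 < k * k")
    case True
    then have "v \<in> {1..k*k}" using v by auto
    then show ?thesis using card_Av_Ws[OF k _ s, of v g] True by (simp add: Hs_Suc)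
  next
    case False
    have "(v - 1 - k * k) div (k * k + 1) < k - 1" using anchor_idx_lt[OF v False] .
    then have "bal k M g v \<inter> Ws k s = {(v - 1 - k * k) div (k * k + 1)}"
      using False unfolding bal_def Ws_def by auto
    then show ?thesis using False by simp
  qed
  then show ?thesis unfolding pavsc_Hs Base_def Ex_def by (simp add: sum.distrib)
qed

lemma sum_if_less:
  assumes "a \<le> k"
  shows "(\<Sum>i<k. if i < a then c else 0) = real a * (c::real)"
proof -
  have "(\<Sum>i<k. if i < a then c else 0) = (\<Sum>i\<in>{..<k} \<inter> {..<a}. c)"
    by (subst sum.inter_restrict) auto
  also have "{..<k} \<inter> {..<a} = {..<a}" using assms by auto
  finally show ?thesis by simp
qed

lemma Ex_valw:
  assumes k: "k \<ge> 1" and gk: "\<forall>j\<in>{1..k}. g s j \<le> k"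
  shows "Ex k g s = valw k (g s)"
proof -
  define G where "G u = (if u mod k < g s (u div k + 1) then 1 / real (u div k + 1) else (0::real))" for u
  have "Ex k g s = (\<Sum>v\<in>{1..k*k}. G (v - 1))"
    unfolding Ex_def G_def
    by (rule sum.mono_neutral_cong_right) (auto simp: nvot_def)
  also have "{1..k*k} = Suc ` {..<k*k}" by (simp add: image_Suc_lessThan)
  also have "(\<Sum>v\<in>Suc ` {..<k*k}. G (v - 1)) = (\<Sum>u<k*k. G u)"
    by (subst sum.reindex) auto
  also have "\<dots> = (\<Sum>q<k. \<Sum>u\<in>{q*k..<q*k+k}. G u)"
    using sum.nat_group[of G k k] by simp
  also have "\<dots> = (\<Sum>q<k. real (g s (q + 1)) / real (q + 1))"
  proof (rule sum.cong[OF refl])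
    fix q assume q: "q \<in> {..<k}"
    have "{q*k..<q*k+k} = (\<lambda>i. q*k + i) ` {..<k}"
    proof (intro equalityI subsetI)
      fix x assume "x \<in> {q*k..<q*k+k}"
      then have "x = q*k + (x - q*k)" "x - q*k < k" by auto
      then show "x \<in> (\<lambda>i. q*k + i) ` {..<k}" by blast
    qed auto
    then have "(\<Sum>u\<in>{q*k..<q*k+k}. G u) = (\<Sum>i<k. G (q*k + i))"
      by (simp add: sum.reindex)
    also have "\<dots> = (\<Sum>i<k. if i < g s (q + 1) then 1 / real (q + 1) else 0)"
    proof (rule sum.cong[OF refl])
      fix i assume i: "i \<in> {..<k}"
      have "(q*k + i) div k = q" "(q*k + i) mod k = i" using i k by auto
      then show "G (q*k + i) = (if i < g s (q + 1) then 1 / real (q + 1) else 0)"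
        unfolding G_def by simp
    qed
    also have "\<dots> = real (g s (q + 1)) * (1 / real (q + 1))"
      using gk q by (intro sum_if_less) auto
    finally show "(\<Sum>u\<in>{q*k..<q*k+k}. G u) = real (g s (q + 1)) / real (q + 1)" by simp
  qed
  also have "\<dots> = valw k (g s)"
  proof -
    have "{1..k} = Suc ` {..<k}" by (simp add: image_Suc_lessThan)
    then show ?thesis unfolding valw_def by (simp add: sum.reindex)
  qed
  finally show ?thesis .
qed

lemma least_wrt_Min:
  assumes "finite S" "S \<noteq> {}"
  shows "least_wrt {(a, b). a < b} S = Min S"
  unfolding least_wrt_def
proof (rule the_equality)
  show "Min S \<in> S \<and> (\<forall>y\<in>S. y \<noteq> Min S \<longrightarrow> (Min S, y) \<in> {(a, b). a < b})"
    using assms by (auto simp: order.not_eq_order_implies_strict)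
next
  fix x assume x: "x \<in> S \<and> (\<forall>y\<in>S. y \<noteq> x \<longrightarrow> (x, y) \<in> {(a, b). a < b})"
  show "x = Min S"
  proof (rule ccontr)
    assume "x \<noteq> Min S"
    moreover have "Min S \<in> S" using assms by simp
    ultimately have "x < Min S" using x by auto
    moreover have "Min S \<le> x" using x assms by auto
    ultimately show False by simp
  qed
qed

lemma lex_step_Ws:
  assumes k: "k \<ge> 1" and t: "Suc t < M"
    and mono: "\<And>s t. s < t \<Longrightarrow> t < M \<Longrightarrow>
        pavsc (nvot k) (bal k M g) (Ws k s) < pavsc (nvot k) (bal k M g) (Ws k t)"
  shows "lex_step {(a, b). a < b} (Cs k M) (nvot k) (bal k M g) (Ws k t) = Some (Ws k (Suc t))"
proof -
  define n where "n = nvot k"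
  define A where "A = bal k M g"
  define W where "W = Ws k t"
  define P where "P s = pavsc n A (Ws k s)" for s
  have Pm: "\<And>s t. s < t \<Longrightarrow> t < M \<Longrightarrow> P s < P t" unfolding P_def n_def A_def by (rule mono)
  have FW: "{..<k - 1} \<subseteq> W" unfolding W_def Ws_def by auto
  have fin: "finite W" unfolding W_def by (rule Ws_finite)
  have act: "pav_delta n A W (t + k) (s + k) = P s - P t" if "s \<noteq> t" for s
  proof -
    have "insert (s + k) (W - {t + k}) = Ws k s" unfolding W_def Ws_def using that by auto
    then show ?thesis unfolding pav_delta_def P_def W_def by simp
  qed
  have froz: "pav_delta n A W a b < 0" if "a < k - 1" "b \<notin> W" for a b
    unfolding n_def A_def by (rule frozen_neg[OF k fin FW that])
  define Bs where "Bs = {b \<in> Cs k M - W. \<exists>a\<in>W. pav_delta n A W a b > 0}"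
  have Bs: "Bs = (\<lambda>s. s + k) ` {Suc t..<M}"
  proof (intro equalityI subsetI)
    fix x assume "x \<in> Bs"
    then obtain a where x: "x \<in> Cs k M" "x \<notin> W" and a: "a \<in> W" "pav_delta n A W a x > 0"
      unfolding Bs_def by auto
    have "a = t + k" using a froz[of a x] x unfolding W_def Ws_def by force
    obtain s where s: "x = s + k" "s < M" "s \<noteq> t"
      using x FW unfolding Cs_def W_def Ws_def by auto
    then have "P s - P t > 0" using a \<open>a = t + k\<close> act by simp
    then have "t < s" using Pm[of s t] s t by (cases "s < t") auto
    then show "x \<in> (\<lambda>s. s + k) ` {Suc t..<M}" using s by auto
  next
    fix x assume "x \<in> (\<lambda>s. s + k) ` {Suc t..<M}"
    then obtain s where s0: "x = s + k" "s \<in> {Suc t..<M}" by blast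
    then have s: "x = s + k" "t < s" "s < M" by auto
    have "x \<in> Cs k M" unfolding Cs_def using s by auto
    moreover have "x \<notin> W" unfolding W_def Ws_def using s by auto
    moreover have "pav_delta n A W (t + k) x > 0" using act[of s] Pm[of t s] s by simp
    moreover have "t + k \<in> W" unfolding W_def Ws_def by simp
    ultimately show "x \<in> Bs" unfolding Bs_def by blast
  qed
  have BsM: "Min Bs = Suc t + k"
  proof -
    have "Min ((\<lambda>s. s + k) ` {Suc t..<M}) = Suc t + k"
      using t by (intro Min_eqI) auto
    then show ?thesis unfolding Bs .
  qed
  have Bsne: "Bs \<noteq> {}" "finite Bs" unfolding Bs using t by auto
  define As where "As = {a \<in> W. pav_delta n A W a (Suc t + k) > 0}"
  have As: "As = {t + k}"
  proof (intro equalityI subsetI)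
    fix a assume "a \<in> As"
    then have "a \<in> W" "pav_delta n A W a (Suc t + k) > 0" unfolding As_def by auto
    moreover have "Suc t + k \<notin> W" unfolding W_def Ws_def by auto
    ultimately show "a \<in> {t + k}" using froz[of a "Suc t + k"] unfolding W_def Ws_def by force
  next
    fix a assume "a \<in> {t + k}"
    then show "a \<in> As" unfolding As_def W_def Ws_def using act[of "Suc t"] Pm[of t "Suc t"] t
      by (simp add: W_def Ws_def)
  qed
  have res: "insert (Suc t + k) (W - {t + k}) = Ws k (Suc t)" unfolding W_def Ws_def by auto
  have lB: "least_wrt {(a, b). a < b} Bs = Suc t + k" using Bsne BsM by (simp add: least_wrt_Min)
  have lA: "least_wrt {(a, b). a < b} As = t + k" unfolding As by (simp add: least_wrt_Min)
  show ?thesis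
    unfolding lex_step_def Let_def n_def[symmetric] A_def[symmetric] W_def[symmetric] Bs_def[symmetric]
    unfolding lB As_def[symmetric] lA using Bsne res by simp
qed

lemma run_Ws:
  assumes k: "k \<ge> 1"
    and mono: "\<And>s t. s < t \<Longrightarrow> t < M \<Longrightarrow>
        pavsc (nvot k) (bal k M g) (Ws k s) < pavsc (nvot k) (bal k M g) (Ws k t)"
  shows "performs_at_least {(a, b). a < b} (Cs k M) (nvot k) (bal k M g) (Ws k 0) (M - 1)"
  unfolding performs_at_least_def
  by (rule exI[of _ "Ws k"]) (auto intro!: lex_step_Ws[OF k _ mono])



lemma two_t_le: "t \<ge> 4 \<Longrightarrow> 2 * t + 4 \<le> (2::nat) ^ t"
proof (induction t rule: nat_induct_at_least)
  case base then show ?case by simp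
next
  case (Suc t) then show ?case by simp
qed

lemma sq_le_pow: "(t + 1)^2 + t + 2 \<le> (2::nat) ^ t + 128"
proof (cases "t \<ge> 7")
  case True
  have "(t + 1)^2 + t + 2 \<le> (2::nat) ^ t" using True
  proof (induction t rule: nat_induct_at_least)
    case base then show ?case by simp
  next
    case (Suc t)
    have "(Suc t + 1)^2 + Suc t + 2 = ((t + 1)^2 + t + 2) + (2 * t + 4)" by (simp add: power2_eq_square)
    also have "\<dots> \<le> 2 ^ t + 2 ^ t" using Suc two_t_le[of t] by simp
    finally show ?case by simp
  qed
  then show ?thesis by simp
next
  case False
  then have "t \<le> 6" by simp
  then have "(t + 1)^2 \<le> (7::nat)^2" by (intro power_mono) auto
  then show ?thesis using \<open>t \<le> 6\<close> by simp
qed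

lemma key_ineq:
  assumes k: "k \<ge> 1"
  shows "real k powr log 2 (real k) \<le> 2 ^ 128 * 2 ^ k / real (k + 1)"
proof -
  define x where "x = log 2 (real k)"
  have kp: "real k > 0" using k by simp
  have x0: "x \<ge> 0" unfolding x_def using k by simp
  have kx: "2 powr x = real k" unfolding x_def using kp by simp
  define t where "t = nat \<lfloor>x\<rfloor>"
  have tx: "real t \<le> x" "x < real t + 1" unfolding t_def using x0 by linarith+
  have "2 powr real t \<le> 2 powr x" using tx by (intro powr_mono) auto
  then have tk: "2 ^ t \<le> real k" using kx by (simp add: powr_realpow)
  have "x * x + x + 1 \<le> (real t + 1)^2 + real t + 2"
  proof -
    have "x * x \<le> (real t + 1) * (real t + 1)" using tx x0 by (intro mult_mono) auto
    then show ?thesis using tx by (simp add: power2_eq_square)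
  qed
  also have "\<dots> = real ((t + 1)^2 + t + 2)" by simp
  also have "\<dots> \<le> real ((2::nat) ^ t + 128)" using sq_le_pow[of t] by (intro of_nat_mono)
  also have "\<dots> = 2 ^ t + 128" by simp
  also have "\<dots> \<le> real k + 128" using tk by simp
  finally have xx: "x * x \<le> real k + 127 - x" by simp
  have "real k powr x = 2 powr (x * x)"
    unfolding kx[symmetric] powr_powr ..
  also have "\<dots> \<le> 2 powr (real k + 127 - x)" using xx by (intro powr_mono) auto
  also have "\<dots> = 2 powr (real k) * 2 powr 127 / 2 powr x"
    by (simp add: powr_add powr_diff)
  also have "\<dots> = 2 ^ k * 2 ^ 127 / real k" unfolding kx by (simp add: powr_realpow)
  also have "\<dots> \<le> 2 ^ 128 * 2 ^ k / real (k + 1)"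
  proof -
    have "real (k + 1) \<le> 2 * real k" using k by simp
    then have "2 ^ k * 2 ^ 127 * real (k + 1) \<le> 2 ^ 128 * 2 ^ k * real k"
      by (simp add: algebra_simps)
    then show ?thesis using kp by (simp add: field_simps)
  qed
  finally show ?thesis unfolding x_def .
qed

theorem theorem9:
  "\<exists>(p :: real poly) (c :: real). c > 0 \<and>
     (\<forall>k :: nat. k \<ge> 1 \<longrightarrow>
       (\<exists>(n :: nat) (C :: nat set) (A :: nat \<Rightarrow> nat set) (lt :: (nat \<times> nat) set) (W0 :: nat set) (m :: nat).
          approval_election n C A k \<and> real n \<le> poly p (real k) \<and>
          strict_linear_order_on C lt \<and>
          W0 \<subseteq> C \<and> card W0 = k \<and>
          performs_at_least lt C n A W0 m \<and>
          real m \<ge> c * real k powr log 2 (real k)))"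
proof (rule exI[of _ "[:0, 1, 0, 1:]"], rule exI[of _ "1 / 2 ^ 129"], intro conjI allI impI)
  show "(1 / 2 ^ 129 :: real) > 0" by simp
next
  fix k :: nat assume k: "k \<ge> 1"
  define vs where "vs = sorted_list_of_set (Vset k)"
  define M where "M = length vs"
  have MV: "M = card (Vset k)" unfolding M_def vs_def by simp
  have M2: "M \<ge> 2" unfolding MV using card_Vset_ge2[OF k] .
  have hML: "M \<ge> lcmto k" unfolding MV by (rule card_Vset_ge_lcm)
  define g where "g s = (SOME a. a \<in> Dset k \<and> valw k a = vs ! s)" for s
  have g: "g s \<in> Dset k \<and> valw k (g s) = vs ! s" if s: "s < M" for s
  proof -
    have "vs ! s \<in> Vset k" using s finite_Vset unfolding M_def vs_def
      by (metis nth_mem set_sorted_list_of_set)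
    then obtain a where "a \<in> Dset k" "valw k a = vs ! s" unfolding Vset_def by auto
    then show ?thesis unfolding g_def by (metis (mono_tags, lifting) someI_ex)
  qed
  have gk: "\<forall>j\<in>{1..k}. g s j \<le> k" if "s < M" for s
    using g[OF that] unfolding Dset_def by (auto simp: PiE_def Pi_def)
  have sw: "sorted_wrt (<) vs" unfolding vs_def by (rule strict_sorted_list_of_set)
  have mono: "pavsc (nvot k) (bal k M g) (Ws k s) < pavsc (nvot k) (bal k M g) (Ws k t)"
    if st: "s < t" "t < M" for s t
  proof -
    have sM: "s < M" using st by simp
    have "vs ! s < vs ! t" using sorted_wrt_nth_less[OF sw st[unfolded M_def]] .
    then show ?thesis
      using st pav_Ws[OF k, of s M g] pav_Ws[OF k, of t M g]
        Ex_valw[of k g s, OF k gk[OF sM]] Ex_valw[of k g t, OF k gk[OF st(2)]] g[OF sM] g[OF st(2)] by simp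
  qed
  have run: "performs_at_least {(a, b). a < b} (Cs k M) (nvot k) (bal k M g) (Ws k 0) (M - 1)"
    by (rule run_Ws[OF k mono])
  show "\<exists>n C A lt W0 m.
          approval_election n C A k \<and> real n \<le> poly [:0, 1, 0, 1:] (real k) \<and>
          strict_linear_order_on C lt \<and>
          W0 \<subseteq> C \<and> card W0 = k \<and>
          performs_at_least lt C n A W0 m \<and>
          real m \<ge> (1 / 2 ^ 129) * real k powr log 2 (real k)"
  proof (intro exI conjI)
    show "approval_election (nvot k) (Cs k M) (bal k M g) k"
      unfolding approval_election_def
    proof (intro conjI ballI)
      show "finite (Cs k M)" unfolding Cs_def by auto
    next
      fix v assume v: "v \<in> {1..nvot k}"
      show "bal k M g v \<subseteq> Cs k M"
      proof (cases "v - 1 < k * k")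
        case True
        then have "(v - 1) div k < k" using k by (simp add: div_less_iff_less_mult)
        then show ?thesis using True unfolding bal_def Cs_def by auto
      next
        case False
        then show ?thesis using anchor_idx_lt[OF v False] unfolding bal_def Cs_def by auto
      qed
    qed
    show "real (nvot k) \<le> poly [:0, 1, 0, 1:] (real k)"
    proof -
      have "nvot k \<le> k * k * k + k"
      proof -
        have "(k - 1) * (k * k + 1) = k * k * k + k - (k * k + 1)" using k
          by (simp add: diff_mult_distrib algebra_simps)
        moreover have "k * k \<le> k * k * k" using k by simp
        ultimately show ?thesis unfolding nvot_def by (simp only:)
      qed
      then have "real (nvot k) \<le> real (k * k * k + k)" by (intro of_nat_mono)
      then show ?thesis by (simp add: algebra_simps)
    qed
    show "strict_linear_order_on (Cs k M) {(a, b). a < b}"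
      unfolding strict_linear_order_on_def trans_def irrefl_def total_on_def by auto
    show "Ws k 0 \<subseteq> Cs k M" unfolding Ws_def Cs_def using M2 by auto
    show "card (Ws k 0) = k" unfolding Ws_def using k by simp
    show "performs_at_least {(a, b). a < b} (Cs k M) (nvot k) (bal k M g) (Ws k 0) (M - 1)" by (rule run)
    show "real (M - 1) \<ge> (1 / 2 ^ 129) * real k powr log 2 (real k)"
    proof -
      have "(1 / 2 ^ 129) * real k powr log 2 (real k) \<le> (1 / 2 ^ 129) * (2 ^ 128 * 2 ^ k / real (k + 1))"
        using key_ineq[OF k] by (intro mult_left_mono) auto
      also have "\<dots> = 2 ^ k / (2 * real (k + 1))" by simp
      also have "\<dots> \<le> real (lcmto k) / 2"
        using two_pow_le_lcmto[OF k] by (simp add: field_simps)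
      also have "\<dots> \<le> real M / 2" using hML by simp
      also have "\<dots> \<le> real (M - 1)" using M2 by simp
      finally show ?thesis .
    qed
  qed
qed


end
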